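(* Let $\alpha\ge 0$, $\mu\ge 0$, $n\in\mathbb{N}=\{1,2,\dots\}$ and $x\in[0,\infty)$. Then (i) $T_n(1;x)=1$; (ii) $T_n(t;x)=x+\dfrac{2\alpha x^2}{n}$; (iii) $T_n(t^2;x)=x^2+\dfrac{4\alpha}{n^2}x^2+\dfrac{4\alpha}{n}x^3+\dfrac{4\alpha^2}{n^2}x^4+\dfrac{x}{n}+\dfrac{2\mu x}{n}\dfrac{e_\mu(-nx)}{e_\mu(nx)}$, where $T_n(f;x)$ denotes the operator applied to the function $t\mapsto f(t)$.
   Context: For $\mu>-\tfrac12$ define $\gamma_\mu(2k)=\dfrac{2^{2k}k!\,\Gamma(k+\mu+1/2)}{\Gamma(\mu+1/2)}$ and $\gamma_\mu(2k+1)=\dfrac{2^{2k+1}k!\,\Gamma(k+\mu+3/2)}{\Gamma(\mu+1/2)}$, $k\ge0$; $e_\mu(x)=\sum_{k\ge0} x^k/\gamma_\mu(k)$; $\theta_k=0$ if $k$ is even and $\theta_k=1$ if $k$ is odd. Let $h_k^\mu(\xi,\alpha)=\gamma_\mu(k)\sum_{j=0}^{\lfloor k/2\rfloor}\dfrac{\alpha^j\xi^{k-2j}}{j!\,\gamma_\mu(k-2j)}$ (so $\sum_k h_k^\mu(\xi,\alpha)t^k/\gamma_\mu(k)=e^{\alpha t^2}e_\mu(\xi t)$). For $\alpha\ge0,\mu\ge0$, $n\in\mathbb{N}$ and $x\in[0,\infty)$ define $$T_n(f;x)=\frac{1}{e^{\alpha x^2}e_\mu(nx)}\sum_{k=0}^\infty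 \frac{h_k^\mu(n,\alpha)}{\gamma_\mu(k)}x^k f\!\left(\frac{k+2\mu\theta_k}{n}\right).$$ *)

theory Defs
  imports "HOL-Analysis.Analysis"
begin

definition gamma_mu :: "real \<Rightarrow> nat \<Rightarrow> real" where
  "gamma_mu \<mu> k =
     (if even k
      then 2 ^ k * fact (k div 2) * Gamma (real (k div 2) + \<mu> + 1/2) / Gamma (\<mu> + 1/2)
      else 2 ^ k * fact (k div 2) * Gamma (real (k div 2) + \<mu> + 3/2) / Gamma (\<mu> + 1/2))"

definition e_mu :: "real \<Rightarrow> real \<Rightarrow> real" where
  "e_mu \<mu> x = (\<Sum>k. x ^ k / gamma_mu \<mu> k)"

definition theta :: "nat \<Rightarrow> real" where
  "theta k = (if even k then 0 else 1)"

definition h_mu :: "real \<Rightarrow> nat \<Rightarrow> real \<Rightarrow> real \<Rightarrow> real" where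
  "h_mu \<mu> k \<xi> \<alpha> =
     gamma_mu \<mu> k * (\<Sum>j\<le>k div 2. \<alpha> ^ j * \<xi> ^ (k - 2 * j) / (fact j * gamma_mu \<mu> (k - 2 * j)))"

definition T_op :: "real \<Rightarrow> real \<Rightarrow> nat \<Rightarrow> (real \<Rightarrow> real) \<Rightarrow> real \<Rightarrow> real" where
  "T_op \<alpha> \<mu> n f x =
     (1 / (exp (\<alpha> * x\<^sup>2) * e_mu \<mu> (real n * x))) *
     (\<Sum>k. h_mu \<mu> k (real n) \<alpha> / gamma_mu \<mu> k * x ^ k *
           f ((real k + 2 * \<mu> * theta k) / real n))"

end

theory Submission
  imports Defs
begin

definition ww :: "real \<Rightarrow> nat \<Rightarrow> real" where
  "ww \<mu> k = real k + 2 * \<mu> * theta k"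

lemma Gamma_step: "(z::real) > 0 \<Longrightarrow> Gamma (z + 1) = z * Gamma z"
  by (rule Gamma_plus1) (auto simp: nonpos_Ints_def)

lemma aux_even: "(g3::real) = (real m + \<mu> + 1/2) * g1 \<Longrightarrow> A = 2 ^ (2*m+1) * f * g3 / G
  \<Longrightarrow> B = 2 ^ (2*m) * f * g1 / G \<Longrightarrow> w = 2 * m + 1 + 2 * \<mu> \<Longrightarrow> A = w * B"
proof -
  assume h: "g3 = (real m + \<mu> + 1/2) * g1" "A = 2 ^ (2*m+1) * f * g3 / G"
    "B = 2 ^ (2*m) * f * g1 / G" "w = 2 * m + 1 + 2 * \<mu>"
  have "A = 2 ^ (2*m) * f * (2 * g3) / G" using h(2) by (simp add: power_add)
  also have "2 * g3 = w * g1" using h(1,4) by (simp add: algebra_simps)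
  finally show ?thesis using h(3) by simp
qed

lemma aux_odd: "(A::real) = 2 ^ (2*m+2) * fact (m+1) * g / G
  \<Longrightarrow> B = 2 ^ (2*m+1) * fact m * g / G \<Longrightarrow> w = 2 * m + 2 \<Longrightarrow> A = w * B"
  by (simp add: field_simps power_add)

lemma gamma_Suc:
  assumes "\<mu> \<ge> 0"
  shows "gamma_mu \<mu> (Suc k) = ww \<mu> (Suc k) * gamma_mu \<mu> k"
proof (cases "even k")
  case True
  then obtain m where k: "k = 2*m" by blast
  have e: "Gamma (real m + \<mu> + 3/2) = (real m + \<mu> + 1/2) * Gamma (real m + \<mu> + 1/2)"
    using Gamma_step[of "real m + \<mu> + 1/2"] assms by (simp add: algebra_simps)
  have "gamma_mu \<mu> (Suc k) = 2 ^ (2*m+1) * fact m * Gamma (real m + \<mu> + 3/2) / Gamma (\<mu> + 1/2)"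
    using k by (simp add: gamma_mu_def)
  moreover have "gamma_mu \<mu> k = 2 ^ (2*m) * fact m * Gamma (real m + \<mu> + 1/2) / Gamma (\<mu> + 1/2)"
    using k by (simp add: gamma_mu_def)
  moreover have "ww \<mu> (Suc k) = 2 * m + 1 + 2 * \<mu>" using k by (simp add: ww_def theta_def)
  ultimately show ?thesis using e
    by (metis (no_types, lifting) aux_even)
next
  case False
  then obtain m where k: "k = 2*m+1" by (metis oddE)
  have "gamma_mu \<mu> (Suc k) = 2 ^ (2*m+2) * fact (m+1) * Gamma (real m + \<mu> + 3/2) / Gamma (\<mu> + 1/2)"
    using k by (simp add: gamma_mu_def algebra_simps)
  moreover have "gamma_mu \<mu> k = 2 ^ (2*m+1) * fact m * Gamma (real m + \<mu> + 3/2) / Gamma (\<mu> + 1/2)"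
    using k by (simp add: gamma_mu_def)
  moreover have "ww \<mu> (Suc k) = 2 * m + 2" using k by (simp add: ww_def theta_def)
  ultimately show ?thesis by (metis aux_odd)
qed

lemma gamma_0: "gamma_mu \<mu> 0 = 1" if "\<mu> \<ge> 0"
proof -
  have "Gamma (\<mu> + 1/2) > 0" using that by simp
  then show ?thesis by (simp add: gamma_mu_def)
qed

lemma ww_ge: "\<mu> \<ge> 0 \<Longrightarrow> ww \<mu> k \<ge> real k"
  by (simp add: ww_def theta_def)

lemma gamma_ge_fact: "\<mu> \<ge> 0 \<Longrightarrow> gamma_mu \<mu> k \<ge> fact k"
proof (induction k)
  case 0 then show ?case by (simp add: gamma_0)
next
  case (Suc k)
  have "fact (Suc k) = real (Suc k) * fact k" by simp
  also have "\<dots> \<le> ww \<mu> (Suc k) * gamma_mu \<mu> k"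
    by (rule mult_mono) (use Suc ww_ge[of \<mu> "Suc k"] in auto)
  finally show ?case using gamma_Suc[OF Suc.prems] by simp
qed

lemma gamma_pos: "gamma_mu \<mu> k > 0" if "\<mu> \<ge> 0"
proof -
  have "(0::real) < fact k" by simp
  also have "\<dots> \<le> gamma_mu \<mu> k" using gamma_ge_fact[OF that] .
  finally show ?thesis .
qed

lemma summable_b: assumes "\<mu> \<ge> 0" shows "summable (\<lambda>i. norm (z ^ i / gamma_mu \<mu> i))"
proof (rule summable_comparison_test)
  show "summable (\<lambda>n. inverse (fact n) * \<bar>z\<bar>^n)" by (rule summable_exp)
  show "\<exists>N. \<forall>n\<ge>N. norm (norm (z ^ n / gamma_mu \<mu> n)) \<le> inverse (fact n) * \<bar>z\<bar>^n"
  proof (intro exI allI impI)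
    fix n :: nat
    have "\<bar>z\<bar>^n / gamma_mu \<mu> n \<le> \<bar>z\<bar>^n / fact n"
      by (rule divide_left_mono) (use gamma_ge_fact[OF assms] gamma_pos[OF assms] in auto)
    then show "norm (norm (z ^ n / gamma_mu \<mu> n)) \<le> inverse (fact n) * \<bar>z\<bar>^n"
      using gamma_pos[OF assms, of n] by (simp add: abs_mult power_abs divide_inverse mult.commute)
  qed
qed

lemma even_sum_reindex:
  fixes g :: "nat \<Rightarrow> real"
  shows "(\<Sum>i\<le>k. (if even i then g i else 0)) = (\<Sum>j\<le>k div 2. g (2*j))"
proof -
  have "(\<Sum>i\<le>k. (if even i then g i else 0)) = (\<Sum>i\<in>{i\<in>{..k}. even i}. g i)"
    by (rule sum.inter_filter[symmetric]) simp
  also have "{i\<in>{..k}. even i} = (\<lambda>j. 2*j) ` {..k div 2}"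
  proof
    show "{i \<in> {..k}. even i} \<subseteq> (*) 2 ` {..k div 2}"
      by (auto elim!: evenE)
    show "(*) 2 ` {..k div 2} \<subseteq> {i \<in> {..k}. even i}"
      by auto
  qed
  also have "(\<Sum>i\<in>(\<lambda>j. 2*j) ` {..k div 2}. g i) = (\<Sum>j\<le>k div 2. g (2*j))"
    by (subst sum.reindex) (auto simp: inj_on_def)
  finally show ?thesis .
qed

lemma prod2_sums:
  fixes p q :: "nat \<Rightarrow> real"
  assumes p: "summable (\<lambda>k. norm (p k))" and q: "summable (\<lambda>k. norm (q k))"
  shows "(\<lambda>k. \<Sum>j\<le>k div 2. p j * q (k - 2*j)) sums (suminf p * suminf q)"
proof -
  define A where "A m = (if even m then p (m div 2) else 0)" for m
  have "(\<lambda>n. if even n then p (n div 2) else (\<lambda>_. 0) ((n - 1) div 2)) sums (0 + suminf p)"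
    by (rule sums_if) (use summable_norm_cancel[OF p] in \<open>auto simp: summable_sums\<close>)
  moreover have "A = (\<lambda>n. if even n then p (n div 2) else 0)" by (simp add: A_def fun_eq_iff)
  ultimately have As: "A sums suminf p" by simp
  have "(\<lambda>n. if even n then norm (p (n div 2)) else (\<lambda>_. 0) ((n - 1) div 2)) sums (0 + suminf (\<lambda>k. norm (p k)))"
    by (rule sums_if) (use p in \<open>auto simp: summable_sums\<close>)
  then have "summable (\<lambda>m. norm (A m))"
    by (auto simp: A_def sums_iff if_distrib cong: if_cong)
  from Cauchy_product_sums[OF this q]
  have "(\<lambda>k. \<Sum>i\<le>k. A i * q (k - i)) sums (suminf A * suminf q)" .
  moreover have "(\<Sum>i\<le>k. A i * q (k - i)) = (\<Sum>j\<le>k div 2. p j * q (k - 2*j))" for k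
  proof -
    have "(\<Sum>i\<le>k. A i * q (k - i)) = (\<Sum>i\<le>k. if even i then p (i div 2) * q (k - i) else 0)"
      by (rule sum.cong) (auto simp: A_def)
    then show ?thesis using even_sum_reindex[of "\<lambda>i. p (i div 2) * q (k - i)" k] by simp
  qed
  ultimately show ?thesis using sums_unique[OF As] by simp
qed

lemma L_a: "(\<lambda>j. y^j / fact j) sums exp (y::real)"
  using exp_converges[of y] by (simp add: divide_inverse mult.commute)

lemma shift_sums: "(\<lambda>j. f (Suc j)) sums s \<Longrightarrow> f 0 = 0 \<Longrightarrow> f sums (s::real)"
  using sums_Suc_iff[of f s] by simp

lemma a_Suc: "real (Suc j) * (y^(Suc j) / fact (Suc j)) = y * (y^j / fact j)"
proof -
  have "real (Suc j) * (y^(Suc j) / fact (Suc j)) = real (Suc j) * (y * y^j) / (real (Suc j) * fact j)"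
    by (simp only: fact_Suc power_Suc of_nat_mult times_divide_eq_right)
  also have "\<dots> = y * y^j / fact j"
    by (rule mult_divide_mult_cancel_left) simp
  finally show ?thesis by simp
qed

lemma L_ja: "(\<lambda>j. real j * (y^j / fact j)) sums (y * exp (y::real))"
proof (rule shift_sums)
  have "(\<lambda>j. y * (y^j / fact j)) sums (y * exp y)" by (rule sums_mult[OF L_a])
  moreover note a_Suc
  ultimately show "(\<lambda>j. real (Suc j) * (y^(Suc j) / fact (Suc j))) sums (y * exp y)" by simp
qed simp

lemma L_j2a: "(\<lambda>j. (real j)^2 * (y^j / fact j)) sums (y * (y * exp y + exp (y::real)))"
proof (rule shift_sums)
  have "(\<lambda>j. y * (real j * (y^j / fact j) + y^j / fact j)) sums (y * (y * exp y + exp y))"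
    by (rule sums_mult[OF sums_add[OF L_ja L_a]])
  moreover have "(real (Suc j))^2 * (y^(Suc j) / fact (Suc j)) = y * (real j * (y^j / fact j) + y^j / fact j)" for j
  proof -
    have "(real (Suc j))^2 * (y^(Suc j) / fact (Suc j)) = real (Suc j) * (real (Suc j) * (y^(Suc j) / fact (Suc j)))"
      by (simp add: power2_eq_square)
    also have "\<dots> = y * (real j * (y^j / fact j) + y^j / fact j)"
    proof -
      have "real (Suc j) * (y * A) = y * (real j * A + A)" for A :: real by (simp add: algebra_simps)
      then show ?thesis by (simp only: a_Suc)
    qed
    finally show ?thesis .
  qed
  ultimately show "(\<lambda>j. (real (Suc j))^2 * (y^(Suc j) / fact (Suc j))) sums (y * (y * exp y + exp y))" by simp
qed simp

lemma L_b: "\<mu> \<ge> 0 \<Longrightarrow> (\<lambda>i. z^i / gamma_mu \<mu> i) sums e_mu \<mu> z"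
  unfolding e_mu_def by (rule summable_sums[OF summable_norm_cancel[OF summable_b]])

lemma ww_pos: "\<mu> \<ge> 0 \<Longrightarrow> ww \<mu> (Suc i) > 0"
  using ww_ge[of \<mu> "Suc i"] by linarith

lemma b_Suc: "\<mu> \<ge> 0 \<Longrightarrow> ww \<mu> (Suc i) * (z^(Suc i) / gamma_mu \<mu> (Suc i)) = z * (z^i / gamma_mu \<mu> i)"
  using ww_pos[of \<mu> i] gamma_pos[of \<mu> i] by (simp add: gamma_Suc field_simps)

lemma ww_0: "ww \<mu> 0 = 0" by (simp add: ww_def theta_def)

lemma L_wb: assumes "\<mu> \<ge> 0"
  shows "(\<lambda>i. ww \<mu> i * (z^i / gamma_mu \<mu> i)) sums (z * e_mu \<mu> z)"
proof (rule shift_sums)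
  show "(\<lambda>i. ww \<mu> (Suc i) * (z^(Suc i) / gamma_mu \<mu> (Suc i))) sums (z * e_mu \<mu> z)"
    by (simp only: b_Suc[OF assms]) (rule sums_mult[OF L_b[OF assms]])
qed (simp add: ww_0)

lemma L_alt: assumes "\<mu> \<ge> 0"
  shows "(\<lambda>i. (-1)^i * (z^i / gamma_mu \<mu> i)) sums e_mu \<mu> (-z)"
proof -
  have "(-z)^i / gamma_mu \<mu> i = (-1)^i * (z^i / gamma_mu \<mu> i)" for i
    by (subst power_minus) simp
  then show ?thesis using L_b[OF assms, of "-z"] by (simp only:)
qed

lemma ww_Suc: "ww \<mu> (Suc i) = ww \<mu> i + 1 + 2 * \<mu> * (-1)^i"
  by (cases "even i") (auto simp: ww_def theta_def minus_one_power_iff)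

lemma L_w2b: assumes "\<mu> \<ge> 0"
  shows "(\<lambda>i. (ww \<mu> i)^2 * (z^i / gamma_mu \<mu> i)) sums
     (z * (z * e_mu \<mu> z + e_mu \<mu> z + 2 * \<mu> * e_mu \<mu> (-z)))"
proof (rule shift_sums)
  have "(\<lambda>i. z * (ww \<mu> i * (z^i / gamma_mu \<mu> i) + z^i / gamma_mu \<mu> i
      + 2 * \<mu> * ((-1)^i * (z^i / gamma_mu \<mu> i))))
    sums (z * (z * e_mu \<mu> z + e_mu \<mu> z + 2 * \<mu> * e_mu \<mu> (-z)))"
    by (intro sums_mult sums_add L_wb L_b L_alt assms)
  moreover have "(ww \<mu> (Suc i))^2 * (z^(Suc i) / gamma_mu \<mu> (Suc i)) =
     z * (ww \<mu> i * (z^i / gamma_mu \<mu> i) + z^i / gamma_mu \<mu> i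
      + 2 * \<mu> * ((-1)^i * (z^i / gamma_mu \<mu> i)))" for i
  proof -
    have "(ww \<mu> (Suc i))^2 * (z^(Suc i) / gamma_mu \<mu> (Suc i)) =
       ww \<mu> (Suc i) * (ww \<mu> (Suc i) * (z^(Suc i) / gamma_mu \<mu> (Suc i)))"
      by (simp add: power2_eq_square)
    also have "\<dots> = ww \<mu> (Suc i) * (z * (z^i / gamma_mu \<mu> i))" by (simp only: b_Suc[OF assms])
    also have "\<dots> = z * (ww \<mu> i * (z^i / gamma_mu \<mu> i) + z^i / gamma_mu \<mu> i
      + 2 * \<mu> * ((-1)^i * (z^i / gamma_mu \<mu> i)))"
    proof -
      have "w1 = w + 1 + 2 * \<mu> * s \<Longrightarrow> w1 * (z * B) = z * (w * B + B + 2 * \<mu> * (s * B))"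
        for w1 w s B :: real by (simp add: algebra_simps)
      then show ?thesis using ww_Suc[of \<mu> i] by blast
    qed
    finally show ?thesis .
  qed
  ultimately show "(\<lambda>i. (ww \<mu> (Suc i))^2 * (z^(Suc i) / gamma_mu \<mu> (Suc i))) sums
     (z * (z * e_mu \<mu> z + e_mu \<mu> z + 2 * \<mu> * e_mu \<mu> (-z)))" by simp
qed (simp add: ww_0)

lemma hterm:
  assumes "\<mu> \<ge> 0"
  shows "h_mu \<mu> k (real n) \<alpha> / gamma_mu \<mu> k * x^k =
    (\<Sum>j\<le>k div 2. ((\<alpha> * x\<^sup>2)^j / fact j) * ((real n * x)^(k - 2*j) / gamma_mu \<mu> (k - 2*j)))"
proof -
  have g: "gamma_mu \<mu> k \<noteq> 0" using gamma_pos[OF assms, of k] by simp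
  have "h_mu \<mu> k (real n) \<alpha> / gamma_mu \<mu> k * x^k =
     (\<Sum>j\<le>k div 2. \<alpha> ^ j * real n ^ (k - 2 * j) / (fact j * gamma_mu \<mu> (k - 2 * j))) * x^k"
    unfolding h_mu_def using g by simp
  also have "\<dots> = (\<Sum>j\<le>k div 2. \<alpha> ^ j * real n ^ (k - 2 * j) / (fact j * gamma_mu \<mu> (k - 2 * j)) * x^k)"
    by (rule sum_distrib_right)
  also have "\<dots> = (\<Sum>j\<le>k div 2. ((\<alpha> * x\<^sup>2)^j / fact j) * ((real n * x)^(k - 2*j) / gamma_mu \<mu> (k - 2*j)))"
  proof (rule sum.cong)
    fix j assume "j \<in> {..k div 2}"
    then have "k = 2*j + (k - 2*j)" by auto
    then have xk: "x^k = (x\<^sup>2)^j * x^(k - 2*j)"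
      by (metis power_add power_mult)
    show "\<alpha> ^ j * real n ^ (k - 2 * j) / (fact j * gamma_mu \<mu> (k - 2 * j)) * x^k =
      ((\<alpha> * x\<^sup>2)^j / fact j) * ((real n * x)^(k - 2*j) / gamma_mu \<mu> (k - 2*j))"
      unfolding xk power_mult_distrib by simp
  qed simp
  finally show ?thesis .
qed

lemma ww_split: "j \<le> k div 2 \<Longrightarrow> ww \<mu> k = 2 * real j + ww \<mu> (k - 2*j)"
proof -
  assume "j \<le> k div 2"
  then have le: "2*j \<le> k" by auto
  then have "even (k - 2*j) \<longleftrightarrow> even k" by auto
  with le show ?thesis by (simp add: ww_def theta_def of_nat_diff)
qed

lemma summable_norm_nonneg: "(f::nat\<Rightarrow>real) sums s \<Longrightarrow> (\<And>k. f k \<ge> 0) \<Longrightarrow> summable (\<lambda>k. norm (f k))"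
  by (simp add: sums_summable)

theorem lemma3:
  fixes \<alpha> \<mu> x :: real and n :: nat
  assumes "\<alpha> \<ge> 0" and "\<mu> \<ge> 0" and "n \<ge> 1" and "x \<ge> 0"
  shows "T_op \<alpha> \<mu> n (\<lambda>t. 1) x = 1 \<and>
         T_op \<alpha> \<mu> n (\<lambda>t. t) x = x + 2 * \<alpha> * x\<^sup>2 / real n \<and>
         T_op \<alpha> \<mu> n (\<lambda>t. t\<^sup>2) x =
           x\<^sup>2 + 4 * \<alpha> / (real n)\<^sup>2 * x\<^sup>2 + 4 * \<alpha> / real n * x ^ 3
           + 4 * \<alpha>\<^sup>2 / (real n)\<^sup>2 * x ^ 4 + x / real n
           + 2 * \<mu> * x / real n * (e_mu \<mu> (- (real n * x)) / e_mu \<mu> (real n * x))"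
proof -
  note mu = assms(2)
  define y where "y = \<alpha> * x\<^sup>2"
  define z where "z = real n * x"
  define a where "a j = y^j / fact j" for j
  define b where "b i = z^i / gamma_mu \<mu> i" for i
  define ez where "ez = e_mu \<mu> z"
  define em where "em = e_mu \<mu> (-z)"
  define P where "P p q k = (\<Sum>j\<le>k div 2. p j * q (k - 2*j))" for p q :: "nat \<Rightarrow> real" and k
  have y0: "y \<ge> 0" using assms by (simp add: y_def)
  have z0: "z \<ge> 0" using assms by (simp add: z_def)
  have npos: "real n > 0" using assms by simp
  have a0: "a j \<ge> 0" for j using y0 by (simp add: a_def)
  have b0: "b i \<ge> 0" for i using z0 gamma_pos[OF mu, of i] by (simp add: b_def)
  have w0: "ww \<mu> i \<ge> 0" for i using ww_ge[OF mu, of i] by linarith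
  have Sa: "a sums exp y" unfolding a_def by (rule L_a)
  have Sja: "(\<lambda>j. 2 * real j * a j) sums (2 * (y * exp y))"
    using sums_mult[OF L_ja[of y], of 2] by (simp add: a_def mult.assoc)
  have Sj2a: "(\<lambda>j. 4 * (real j)^2 * a j) sums (4 * (y * (y * exp y + exp y)))"
    using sums_mult[OF L_j2a[of y], of 4] by (simp add: a_def mult.assoc)
  have Sj4a: "(\<lambda>j. 4 * real j * a j) sums (4 * (y * exp y))"
    using sums_mult[OF L_ja[of y], of 4] by (simp add: a_def mult.assoc)
  have Sb: "b sums ez" unfolding b_def ez_def by (rule L_b[OF mu])
  have Swb: "(\<lambda>i. ww \<mu> i * b i) sums (z * ez)" unfolding b_def ez_def by (rule L_wb[OF mu])
  have Sw2b: "(\<lambda>i. (ww \<mu> i)^2 * b i) sums (z * (z * ez + ez + 2 * \<mu> * em))"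
    unfolding b_def ez_def em_def by (rule L_w2b[OF mu])
  have na: "summable (\<lambda>k. norm (a k))" by (rule summable_norm_nonneg[OF Sa a0])
  have nja: "summable (\<lambda>k. norm (2 * real k * a k))" by (rule summable_norm_nonneg[OF Sja]) (simp add: a0)
  have nj2a: "summable (\<lambda>k. norm (4 * (real k)^2 * a k))" by (rule summable_norm_nonneg[OF Sj2a]) (simp add: a0)
  have nj4a: "summable (\<lambda>k. norm (4 * real k * a k))" by (rule summable_norm_nonneg[OF Sj4a]) (simp add: a0)
  have nb: "summable (\<lambda>k. norm (b k))" by (rule summable_norm_nonneg[OF Sb b0])
  have nwb: "summable (\<lambda>k. norm (ww \<mu> k * b k))" by (rule summable_norm_nonneg[OF Swb]) (simp add: b0 w0)
  have nw2b: "summable (\<lambda>k. norm ((ww \<mu> k)^2 * b k))" by (rule summable_norm_nonneg[OF Sw2b]) (simp add: b0)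
  have P_sums: "summable (\<lambda>k. norm (p k)) \<Longrightarrow> summable (\<lambda>k. norm (q k)) \<Longrightarrow> p sums sp \<Longrightarrow> q sums sq
     \<Longrightarrow> P p q sums (sp * sq)" for p q sp sq
    using prod2_sums[of p q] sums_unique[of p sp] sums_unique[of q sq] unfolding P_def by simp
  have ez_pos: "ez > 0"
  proof -
    have "0 < suminf b" by (rule suminf_pos2[of b 0]) (use Sb b0 gamma_0[OF mu] in \<open>auto simp: sums_iff b_def\<close>)
    then show ?thesis using Sb by (simp add: sums_iff)
  qed
  define E where "E = exp y * ez"
  have Epos: "E > 0" using ez_pos by (simp add: E_def)
  have cterm: "h_mu \<mu> k (real n) \<alpha> / gamma_mu \<mu> k * x^k = P a b k" for k
    unfolding hterm[OF mu] P_def a_def b_def y_def z_def ..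
  have arg: "(real k + 2 * \<mu> * theta k) / real n = ww \<mu> k / real n" for k by (simp add: ww_def)
  have wsplit: "P a b k * ww \<mu> k = P (\<lambda>j. 2 * real j * a j) b k + P a (\<lambda>i. ww \<mu> i * b i) k" for k
  proof -
    have "P a b k * ww \<mu> k = (\<Sum>j\<le>k div 2. a j * b (k - 2*j) * ww \<mu> k)"
      unfolding P_def by (rule sum_distrib_right)
    also have "\<dots> = (\<Sum>j\<le>k div 2. 2 * real j * a j * b (k - 2*j) + a j * (ww \<mu> (k - 2*j) * b (k - 2*j)))"
      by (rule sum.cong) (auto simp: ww_split[of _ k \<mu>] algebra_simps)
    finally show ?thesis unfolding P_def by (simp add: sum.distrib)
  qed
  have w2split: "P a b k * (ww \<mu> k)^2 = P (\<lambda>j. 4 * (real j)^2 * a j) b k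
     + P (\<lambda>j. 4 * real j * a j) (\<lambda>i. ww \<mu> i * b i) k + P a (\<lambda>i. (ww \<mu> i)^2 * b i) k" for k
  proof -
    have "P a b k * (ww \<mu> k)^2 = (\<Sum>j\<le>k div 2. a j * b (k - 2*j) * (ww \<mu> k)^2)"
      unfolding P_def by (rule sum_distrib_right)
    also have "\<dots> = (\<Sum>j\<le>k div 2. 4 * (real j)^2 * a j * b (k - 2*j)
        + 4 * real j * a j * (ww \<mu> (k - 2*j) * b (k - 2*j)) + a j * ((ww \<mu> (k - 2*j))^2 * b (k - 2*j)))"
      by (rule sum.cong) (auto simp: ww_split[of _ k \<mu>] algebra_simps power2_eq_square)
    finally show ?thesis unfolding P_def by (simp add: sum.distrib)
  qed
  have S0: "P a b sums (exp y * ez)" by (rule P_sums[OF na nb Sa Sb])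
  have S1: "(\<lambda>k. P a b k * ww \<mu> k) sums (2 * (y * exp y) * ez + exp y * (z * ez))"
    unfolding wsplit by (intro sums_add P_sums na nb nja nwb Sa Sb Sja Swb)
  have S2: "(\<lambda>k. P a b k * (ww \<mu> k)^2) sums (4 * (y * (y * exp y + exp y)) * ez
      + 4 * (y * exp y) * (z * ez) + exp y * (z * (z * ez + ez + 2 * \<mu> * em)))"
    unfolding w2split by (intro sums_add P_sums na nb nj2a nj4a nwb nw2b Sa Sb Sj2a Sj4a Swb Sw2b)
  have T0: "T_op \<alpha> \<mu> n (\<lambda>t. 1) x = 1"
  proof -
    have "T_op \<alpha> \<mu> n (\<lambda>t. 1) x = 1 / E * suminf (P a b)"
      unfolding T_op_def cterm E_def ez_def y_def z_def by simp
    also have "\<dots> = 1" using sums_unique[OF S0] Epos by (simp add: E_def)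
    finally show ?thesis .
  qed
  have T1: "T_op \<alpha> \<mu> n (\<lambda>t. t) x = x + 2 * \<alpha> * x\<^sup>2 / real n"
  proof -
    have "T_op \<alpha> \<mu> n (\<lambda>t. t) x = 1 / E * suminf (\<lambda>k. P a b k * ww \<mu> k / real n)"
      unfolding T_op_def cterm arg E_def ez_def y_def z_def by (simp add: mult.assoc)
    also have "suminf (\<lambda>k. P a b k * ww \<mu> k / real n) = (2 * (y * exp y) * ez + exp y * (z * ez)) / real n"
      using sums_unique[OF sums_divide[OF S1, of "real n"]] by simp
    also have "(2 * (y * exp y) * ez + exp y * (z * ez)) / real n = E * ((2 * y + z) / real n)"
      unfolding E_def by (simp add: algebra_simps)
    finally have "T_op \<alpha> \<mu> n (\<lambda>t. t) x = (2 * y + z) / real n"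
      using Epos by simp
    then show ?thesis using npos unfolding y_def z_def
      by (simp add: field_simps)
  qed
  have T2: "T_op \<alpha> \<mu> n (\<lambda>t. t\<^sup>2) x =
           x\<^sup>2 + 4 * \<alpha> / (real n)\<^sup>2 * x\<^sup>2 + 4 * \<alpha> / real n * x ^ 3
           + 4 * \<alpha>\<^sup>2 / (real n)\<^sup>2 * x ^ 4 + x / real n
           + 2 * \<mu> * x / real n * (e_mu \<mu> (- (real n * x)) / e_mu \<mu> (real n * x))"
  proof -
    have "T_op \<alpha> \<mu> n (\<lambda>t. t\<^sup>2) x = 1 / E * suminf (\<lambda>k. P a b k * (ww \<mu> k)^2 / (real n)^2)"
      unfolding T_op_def cterm arg E_def ez_def y_def z_def by (simp add: mult.assoc power_divide)
    also have "suminf (\<lambda>k. P a b k * (ww \<mu> k)^2 / (real n)^2) = (4 * (y * (y * exp y + exp y)) * ez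
      + 4 * (y * exp y) * (z * ez) + exp y * (z * (z * ez + ez + 2 * \<mu> * em))) / (real n)^2"
      using sums_unique[OF sums_divide[OF S2, of "(real n)^2"]] by simp
    also have "(4 * (y * (y * exp y + exp y)) * ez
      + 4 * (y * exp y) * (z * ez) + exp y * (z * (z * ez + ez + 2 * \<mu> * em))) / (real n)^2
      = E * ((4 * (y * (y + 1)) + 4 * y * z + z * z + z + 2 * \<mu> * z * (em / ez)) / (real n)^2)"
      using ez_pos npos unfolding E_def by (simp add: field_simps)
    finally have "T_op \<alpha> \<mu> n (\<lambda>t. t\<^sup>2) x = (4 * (y * (y + 1)) + 4 * y * z + z * z + z + 2 * \<mu> * z * (em / ez)) / (real n)^2"
      using Epos by simp
    moreover have "x ^ 4 = x * x * x * x" "x ^ 3 = x * x * x"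
      by (simp_all add: numeral_eq_Suc)
    ultimately show ?thesis using ez_pos npos unfolding y_def z_def em_def ez_def
      by (simp add: field_simps power2_eq_square)
  qed
  show ?thesis using T0 T1 T2 by blast
qed

end
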